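(* Let $\bar\alpha\in[0,1]$ and $n\ge1$. The minimum of $C(\boldsymbol{\alpha})$ over all $\boldsymbol{\alpha}\in[0,1]^n$ satisfying $G(\boldsymbol{\alpha})=0$ is attained at $\boldsymbol{\alpha}_*=(\bar\alpha,\bar\alpha,\dots,\bar\alpha)$, and the minimum value is $C(\boldsymbol{\alpha}_* )=n\,c(\bar\alpha)$; that is, $C(\boldsymbol{\alpha})\ge n\,c(\bar\alpha)$ for every $\boldsymbol{\alpha}\in[0,1]^n$ with $G(\boldsymbol{\alpha})=0$.
   Context: Model of a road with $n\ge1$ parallel lanes of common length $d>0$. Vehicles have length $L>0$. A vehicle keeps a headway (space gap) $\bar h$ to the vehicle in front of it if both it and the vehicle in front are autonomous, and headway $h$ otherwise, where $0\le \bar h<h$. Vehicle types within a lane are i.i.d. Bernoulli: each vehicle in lane $i$ is autonomous with probability $\alpha_i\in[0,1]$ (the lane's autonomy level). Set $k_1=(L+h)/d$ and $k_2=(h-\bar h)/d$, so $k_1>k_2>0$ and $k_1-k_2=(L+\bar h)/d>0$. The capacity of a lane with autonomy level $\alpha\in[0,1]$ is $$c(\alpha)=\frac{1}{k_1-k_2\alpha^2}=\frac{d}{L+h-(h-\bar h)\alpha^2}.$$ Let $\bar\alpha\in[0,1]$ be the overall fraction of autonomous vehicles on the road. For $\boldsymbol{\alpha}=(\alpha_1,\dots,\alpha_n)\in[0,1]^n$ define $C(\boldsymbol{\alpha})=\sum_{i=1}^n c(\alpha_i)$ (total capacity) and $G(\boldsymbol{\alpha})=\sum_{i=1}^n(\alpha_i-\bar\alpha)c(\alpha_i)$;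 the constraint $G(\boldsymbol{\alpha})=0$ expresses that the overall autonomy level equals $\bar\alpha$. *)

theory Defs
  imports Complex_Main
begin

definition cap :: "real \<Rightarrow> real \<Rightarrow> real \<Rightarrow> real \<Rightarrow> real \<Rightarrow> real" where
  "cap d L h hbar a = d / (L + h - (h - hbar) * a\<^sup>2)"

definition totcap :: "real \<Rightarrow> real \<Rightarrow> real \<Rightarrow> real \<Rightarrow> nat \<Rightarrow> (nat \<Rightarrow> real) \<Rightarrow> real" where
  "totcap d L h hbar n al = (\<Sum>i<n. cap d L h hbar (al i))"

definition Gcon :: "real \<Rightarrow> real \<Rightarrow> real \<Rightarrow> real \<Rightarrow> nat \<Rightarrow> real \<Rightarrow> (nat \<Rightarrow> real) \<Rightarrow> real" where
  "Gcon d L h hbar n abar al = (\<Sum>i<n. (al i - abar) * cap d L h hbar (al i))"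

end

theory Submission
  imports Defs
begin

lemma Dpos:
  fixes L h hbar x :: real
  assumes "L > 0" "0 \<le> hbar" "hbar < h" "0 \<le> x" "x \<le> 1"
  shows "L + h - (h - hbar) * x\<^sup>2 > 0"
proof -
  have "x\<^sup>2 \<le> 1" using assms by (simp add: power_le_one)
  hence "(h - hbar) * x\<^sup>2 \<le> h - hbar" using assms
    by (metis diff_gt_0_iff_gt less_eq_real_def mult.right_neutral mult_left_mono)
  thus ?thesis using assms by linarith
qed

lemma tangent:
  fixes d L h hbar a b :: real
  assumes "d > 0" "L > 0" "0 \<le> hbar" "hbar < h" "0 \<le> a" "a \<le> 1" "0 \<le> b" "b \<le> 1"
  shows "cap d L h hbar a - (2 * (h - hbar) * b / (L + h - (h - hbar) * b\<^sup>2)) * ((a - b) * cap d L h hbar a)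
         \<ge> cap d L h hbar b"
proof -
  define Da where "Da = L + h - (h - hbar) * a\<^sup>2"
  define Db where "Db = L + h - (h - hbar) * b\<^sup>2"
  have pa: "Da > 0" unfolding Da_def using Dpos assms by blast
  have pb: "Db > 0" unfolding Db_def using Dpos assms by blast
  have key: "Db - 2 * (h - hbar) * b * (a - b) - Da \<ge> 0"
  proof -
    have "Db - 2 * (h - hbar) * b * (a - b) - Da = (h - hbar) * (a - b)\<^sup>2"
      unfolding Da_def Db_def by (simp add: power2_eq_square algebra_simps)
    also have "\<dots> \<ge> 0" using assms by simp
    finally show ?thesis .
  qed
  have eq: "cap d L h hbar a - (2 * (h - hbar) * b / Db) * ((a - b) * cap d L h hbar a) - cap d L h hbar b
     = d * (Db - 2 * (h - hbar) * b * (a - b) - Da) / (Da * Db)"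
    unfolding cap_def Da_def[symmetric] Db_def[symmetric] using pa pb
    by (simp add: field_simps)
  have "d * (Db - 2 * (h - hbar) * b * (a - b) - Da) / (Da * Db) \<ge> 0"
    using pa pb key assms by simp
  thus ?thesis using eq unfolding Db_def by linarith
qed

theorem proposition1:
  fixes d L h hbar abar :: real and n :: nat
  assumes "d > 0" and "L > 0" and "0 \<le> hbar" and "hbar < h"
    and "0 \<le> abar" and "abar \<le> 1" and "n \<ge> 1"
  shows "Gcon d L h hbar n abar (\<lambda>_. abar) = 0
    \<and> totcap d L h hbar n (\<lambda>_. abar) = real n * cap d L h hbar abar
    \<and> (\<forall>al :: nat \<Rightarrow> real. (\<forall>i<n. 0 \<le> al i \<and> al i \<le> 1)
          \<longrightarrow> Gcon d L h hbar n abar al = 0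
          \<longrightarrow> totcap d L h hbar n al \<ge> real n * cap d L h hbar abar)"
proof (intro conjI allI impI)
  show "Gcon d L h hbar n abar (\<lambda>_. abar) = 0" by (simp add: Gcon_def)
  show "totcap d L h hbar n (\<lambda>_. abar) = real n * cap d L h hbar abar" by (simp add: totcap_def)
  fix al :: "nat \<Rightarrow> real"
  assume r: "\<forall>i<n. 0 \<le> al i \<and> al i \<le> 1" and g: "Gcon d L h hbar n abar al = 0"
  define mu where "mu = 2 * (h - hbar) * abar / (L + h - (h - hbar) * abar\<^sup>2)"
  have "real n * cap d L h hbar abar = (\<Sum>i<n. cap d L h hbar abar)" by simp
  also have "\<dots> \<le> (\<Sum>i<n. cap d L h hbar (al i) - mu * ((al i - abar) * cap d L h hbar (al i)))"
    apply (rule sum_mono) using tangent[OF assms(1-4) _ _ assms(5,6)] r unfolding mu_def by auto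
  also have "\<dots> = totcap d L h hbar n al - mu * Gcon d L h hbar n abar al"
    by (simp add: totcap_def Gcon_def sum_subtractf sum_distrib_left)
  finally show "totcap d L h hbar n al \<ge> real n * cap d L h hbar abar" using g by simp
qed

end
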